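(* Let $\mathcal W_1$ be a discrete memoryless channel from $\mathcal X_1$ to $\mathcal Y_1$ and $\mathcal W_2$ one from $\mathcal X_2$ to $\mathcal Y_2$ (all finite sets), and let $(\mathcal W_1\times\mathcal W_2)(y_1,y_2|x_1,x_2)=\mathcal W_1(y_1|x_1)\mathcal W_2(y_2|x_2)$. Then $U(\mathcal W_1\times\mathcal W_2)=U(\mathcal W_1)+U(\mathcal W_2)$.
   Context: $D(P\|Q)=\sum P\log(P/Q)$ ($0\log(0/q)=0$; $+\infty$ if $P\not\ll Q$). For a channel $\mathcal W$ from $\mathcal X$ to $\mathcal Y$, $U(\mathcal W)=\max_{P_X\in\mathcal P(\mathcal X)}\min_{Q_Y\in\mathcal P(\mathcal Y)}D(P_X\times Q_Y\|P_{XY})$ with $P_{XY}(x,y)=P_X(x)\mathcal W(y|x)$. *)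

theory Defs
  imports Complex_Main "HOL-Library.Extended_Real"
begin

definition is_distr :: "('a::finite \<Rightarrow> real) \<Rightarrow> bool" where
  "is_distr P \<longleftrightarrow> (\<forall>a. 0 \<le> P a) \<and> (\<Sum>a\<in>UNIV. P a) = 1"

text \<open>A discrete memoryless channel: W x y = W(y|x).\<close>
definition is_channel :: "('x::finite \<Rightarrow> 'y::finite \<Rightarrow> real) \<Rightarrow> bool" where
  "is_channel W \<longleftrightarrow> (\<forall>x. is_distr (W x))"

definition KL_div :: "('a::finite \<Rightarrow> real) \<Rightarrow> ('a \<Rightarrow> real) \<Rightarrow> ereal" where
  "KL_div P Q = (if (\<forall>a. Q a = 0 \<longrightarrow> P a = 0)
     then ereal (\<Sum>a\<in>UNIV. if P a = 0 then 0 else P a * ln (P a / Q a))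
     else \<infinity>)"

definition U_channel :: "('x::finite \<Rightarrow> 'y::finite \<Rightarrow> real) \<Rightarrow> ereal" where
  "U_channel W = (SUP P\<in>{P. is_distr P}. INF Q\<in>{Q. is_distr Q}.
      KL_div (\<lambda>(x, y). P x * Q y) (\<lambda>(x, y). P x * W x y))"

definition prod_channel ::
  "('x1::finite \<Rightarrow> 'y1::finite \<Rightarrow> real) \<Rightarrow> ('x2::finite \<Rightarrow> 'y2::finite \<Rightarrow> real)
    \<Rightarrow> ('x1 \<times> 'x2) \<Rightarrow> ('y1 \<times> 'y2) \<Rightarrow> real" where
  "prod_channel W1 W2 = (\<lambda>(x1, x2) (y1, y2). W1 x1 y1 * W2 x2 y2)"

end

theory Submission
  imports Defs
begin

definition KLs :: "('a::finite \<Rightarrow> real) \<Rightarrow> ('a \<Rightarrow> real) \<Rightarrow> real" where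
  "KLs p q = (\<Sum>a\<in>UNIV. if p a = 0 then 0 else p a * ln (p a / q a))"
definition ACd :: "('a::finite \<Rightarrow> real) \<Rightarrow> ('a \<Rightarrow> real) \<Rightarrow> bool" where
  "ACd p q \<longleftrightarrow> (\<forall>a. q a = 0 \<longrightarrow> p a = 0)"

lemma KL_div_alt: "KL_div p q = (if ACd p q then ereal (KLs p q) else \<infinity>)"
  by (simp add: KL_div_def KLs_def ACd_def)

lemma gibbs:
  fixes p q :: "'a::finite \<Rightarrow> real"
  assumes "\<And>a. 0 \<le> p a" "\<And>a. 0 \<le> q a" "ACd p q" "sum q UNIV \<le> sum p UNIV"
  shows "0 \<le> KLs p q"
proof -
  have "p a - q a \<le> (if p a = 0 then 0 else p a * ln (p a / q a))" for a
  proof (cases "p a = 0")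
    case True then show ?thesis using assms(2)[of a] by simp
  next
    case False
    then have pp: "p a > 0" using assms(1)[of a] by simp
    have qp: "q a > 0" using assms(2)[of a] assms(3) False unfolding ACd_def
      by (metis order_le_less)
    have "ln (q a / p a) \<le> q a / p a - 1" using pp qp by (intro ln_le_minus_one) simp
    moreover have "ln (p a / q a) = - ln (q a / p a)" using pp qp by (simp add: ln_div)
    ultimately have "p a * (1 - q a / p a) \<le> p a * ln (p a / q a)"
      using pp by (intro mult_left_mono) auto
    then show ?thesis using False pp by (simp add: algebra_simps)
  qed
  then have "(\<Sum>a\<in>UNIV. p a - q a) \<le> KLs p q" unfolding KLs_def by (intro sum_mono) 
  then show ?thesis using assms(4) by (simp add: sum_subtractf)
qed

lemma sum_pair: "(\<Sum>z\<in>(UNIV::('a::finite\<times>'b::finite) set). f z) = (\<Sum>a\<in>UNIV. \<Sum>b\<in>UNIV. f (a,b))"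
  by (simp add: sum.cartesian_product)

definition marg1 :: "('a::finite \<times> 'b::finite \<Rightarrow> real) \<Rightarrow> 'a \<Rightarrow> real" where
  "marg1 P a = (\<Sum>b\<in>UNIV. P (a,b))"
definition marg2 :: "('a::finite \<times> 'b::finite \<Rightarrow> real) \<Rightarrow> 'b \<Rightarrow> real" where
  "marg2 P b = (\<Sum>a\<in>UNIV. P (a,b))"
definition pprod :: "('a \<Rightarrow> real) \<Rightarrow> ('b \<Rightarrow> real) \<Rightarrow> 'a \<times> 'b \<Rightarrow> real" where
  "pprod P1 P2 = (\<lambda>(a,b). P1 a * P2 b)"

lemma marg1_distr: "is_distr P \<Longrightarrow> is_distr (marg1 P)"
  unfolding is_distr_def marg1_def by (auto intro: sum_nonneg simp: sum_pair[symmetric])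
lemma marg2_distr: "is_distr P \<Longrightarrow> is_distr (marg2 P)"
  unfolding is_distr_def marg2_def by (auto intro: sum_nonneg simp: sum_pair[symmetric] sum.swap[of _ UNIV UNIV])
lemma pprod_distr: "is_distr P1 \<Longrightarrow> is_distr P2 \<Longrightarrow> is_distr (pprod P1 P2)"
  unfolding is_distr_def pprod_def by (auto simp: sum_pair sum_distrib_left[symmetric] sum_distrib_right[symmetric])
lemma marg1_pprod: "is_distr P2 \<Longrightarrow> marg1 (pprod P1 P2) = P1"
  unfolding is_distr_def pprod_def marg1_def by (auto simp: sum_distrib_left[symmetric])
lemma marg2_pprod: "is_distr P1 \<Longrightarrow> marg2 (pprod P1 P2) = P2"
  unfolding is_distr_def pprod_def marg2_def by (auto simp: sum_distrib_right[symmetric])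
lemma distr_ex: "{P::'a::finite \<Rightarrow> real. is_distr P} \<noteq> {}"
proof -
  have "is_distr ((\<lambda>_. 1 / real (card (UNIV::'a set))) :: 'a \<Rightarrow> real)" unfolding is_distr_def by simp
  then show ?thesis by blast
qed
lemma marg1_ge: "is_distr P \<Longrightarrow> P (a,b) \<le> marg1 P a"
  unfolding marg1_def is_distr_def by (rule member_le_sum[of b UNIV "\<lambda>b. P (a,b)"]) auto
lemma marg2_ge: "is_distr P \<Longrightarrow> P (a,b) \<le> marg2 P b"
  unfolding marg2_def is_distr_def by (rule member_le_sum[of a UNIV "\<lambda>a. P (a,b)"]) auto
lemma marg1_ne: "is_distr P \<Longrightarrow> marg1 P a \<noteq> 0 \<Longrightarrow> \<exists>b. P (a,b) \<noteq> 0"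
  unfolding marg1_def by (metis (no_types, lifting) sum.neutral)
lemma marg2_ne: "is_distr P \<Longrightarrow> marg2 P b \<noteq> 0 \<Longrightarrow> \<exists>a. P (a,b) \<noteq> 0"
  unfolding marg2_def by (metis (no_types, lifting) sum.neutral)

definition F :: "('x::finite \<Rightarrow> 'y::finite \<Rightarrow> real) \<Rightarrow> ('x \<Rightarrow> real) \<Rightarrow> ('y \<Rightarrow> real) \<Rightarrow> ereal" where
  "F W P Q = KL_div (\<lambda>(x, y). P x * Q y) (\<lambda>(x, y). P x * W x y)"

lemma F_nonneg:
  assumes "is_channel W" "is_distr P" "is_distr Q"
  shows "0 \<le> F W P Q"
proof (cases "ACd (\<lambda>(x, y). P x * Q y) (\<lambda>(x, y). P x * W x y)")
  case True
  have s1: "(\<Sum>z\<in>UNIV. (\<lambda>(x, y). P x * Q y) z) = 1"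
    using assms by (simp add: sum_pair is_distr_def sum_distrib_left[symmetric])
  have s2: "(\<Sum>z\<in>UNIV. (\<lambda>(x, y). P x * W x y) z) = 1"
    using assms by (simp add: sum_pair is_distr_def is_channel_def sum_distrib_left[symmetric])
  have "0 \<le> KLs (\<lambda>(x, y). P x * Q y) (\<lambda>(x, y). P x * W x y)"
    using assms True s1 s2 by (intro gibbs) (auto simp: is_distr_def is_channel_def)
  then show ?thesis using True by (simp add: F_def KL_div_alt)
qed (simp add: F_def KL_div_alt)

lemma rearr1: "(\<Sum>x\<in>UNIV. \<Sum>y\<in>UNIV. P x * Q y * g (fst x) (fst y)) = (\<Sum>a\<in>UNIV. \<Sum>b\<in>UNIV. marg1 P a * marg1 Q b * (g a b :: real))"
proof -
  have "(\<Sum>x\<in>UNIV. \<Sum>y\<in>UNIV. P x * Q y * g (fst x) (fst y)) = (\<Sum>a\<in>UNIV. \<Sum>x2\<in>UNIV. \<Sum>b\<in>UNIV. \<Sum>y2\<in>UNIV. P (a,x2) * Q (b,y2) * g a b)"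
    by (simp add: sum_pair)
  also have "\<dots> = (\<Sum>a\<in>UNIV. \<Sum>b\<in>UNIV. \<Sum>x2\<in>UNIV. \<Sum>y2\<in>UNIV. P (a,x2) * Q (b,y2) * g a b)"
    by (rule sum.cong[OF refl], rule sum.swap)
  also have "\<dots> = (\<Sum>a\<in>UNIV. \<Sum>b\<in>UNIV. marg1 P a * marg1 Q b * g a b)"
    by (simp add: marg1_def sum_distrib_right sum_distrib_left mult.assoc, intro sum.cong refl sum.swap)
  finally show ?thesis .
qed

lemma rearr2: "(\<Sum>x\<in>UNIV. \<Sum>y\<in>UNIV. P x * Q y * g (snd x) (snd y)) = (\<Sum>a\<in>UNIV. \<Sum>b\<in>UNIV. marg2 P a * marg2 Q b * (g a b :: real))"
proof -
  have "(\<Sum>x\<in>UNIV. \<Sum>y\<in>UNIV. P x * Q y * g (snd x) (snd y)) = (\<Sum>x1\<in>UNIV. \<Sum>a\<in>UNIV. \<Sum>y1\<in>UNIV. \<Sum>b\<in>UNIV. P (x1,a) * Q (y1,b) * g a b)"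
    by (simp add: sum_pair)
  also have "\<dots> = (\<Sum>a\<in>UNIV. \<Sum>x1\<in>UNIV. \<Sum>y1\<in>UNIV. \<Sum>b\<in>UNIV. P (x1,a) * Q (y1,b) * g a b)"
    by (rule sum.swap)
  also have "\<dots> = (\<Sum>a\<in>UNIV. \<Sum>x1\<in>UNIV. \<Sum>b\<in>UNIV. \<Sum>y1\<in>UNIV. P (x1,a) * Q (y1,b) * g a b)"
    by (intro sum.cong refl sum.swap)
  also have "\<dots> = (\<Sum>a\<in>UNIV. \<Sum>b\<in>UNIV. \<Sum>x1\<in>UNIV. \<Sum>y1\<in>UNIV. P (x1,a) * Q (y1,b) * g a b)"
    by (rule sum.cong[OF refl], rule sum.swap)
  also have "\<dots> = (\<Sum>a\<in>UNIV. \<Sum>b\<in>UNIV. marg2 P a * marg2 Q b * g a b)"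
    by (simp add: marg2_def sum_distrib_right sum_distrib_left mult.assoc, intro sum.cong refl sum.swap)
  finally show ?thesis .
qed

lemma pc_eq: "prod_channel W1 W2 x y = W1 (fst x) (fst y) * W2 (snd x) (snd y)"
  by (simp add: prod_channel_def split: prod.splits)

lemma decomp_real:
  fixes W1 :: "'x1::finite \<Rightarrow> 'y1::finite \<Rightarrow> real"
    and W2 :: "'x2::finite \<Rightarrow> 'y2::finite \<Rightarrow> real"
    and P :: "'x1 \<times> 'x2 \<Rightarrow> real" and Q :: "'y1 \<times> 'y2 \<Rightarrow> real"
  assumes c1: "is_channel W1" and c2: "is_channel W2" and dP: "is_distr P" and dQ: "is_distr Q"
    and AC: "ACd (\<lambda>(x,y). P x * Q y) (\<lambda>(x,y). P x * prod_channel W1 W2 x y)"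
  shows "KLs (\<lambda>(x,y). P x * Q y) (\<lambda>(x,y). P x * prod_channel W1 W2 x y)
    = KLs Q (pprod (marg1 Q) (marg2 Q))
      + KLs (\<lambda>(x,y). marg1 P x * marg1 Q y) (\<lambda>(x,y). marg1 P x * W1 x y)
      + KLs (\<lambda>(x,y). marg2 P x * marg2 Q y) (\<lambda>(x,y). marg2 P x * W2 x y)"
proof -
  define h1 where "h1 a b = (if marg1 P a * marg1 Q b = 0 then 0 else ln (marg1 P a * marg1 Q b / (marg1 P a * W1 a b)))" for a b
  define h2 where "h2 a b = (if marg2 P a * marg2 Q b = 0 then 0 else ln (marg2 P a * marg2 Q b / (marg2 P a * W2 a b)))" for a b
  define j where "j y = (if Q y = 0 then 0 else ln (Q y / pprod (marg1 Q) (marg2 Q) y))" for y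
  have P0: "\<And>x. 0 \<le> P x" and Q0: "\<And>y. 0 \<le> Q y" using dP dQ by (auto simp: is_distr_def)
  have W10: "\<And>a b. 0 \<le> W1 a b" and W20: "\<And>a b. 0 \<le> W2 a b"
    using c1 c2 by (auto simp: is_channel_def is_distr_def)
  have pw: "(if P x * Q y = 0 then 0 else P x * Q y * ln (P x * Q y / (P x * prod_channel W1 W2 x y)))
     = P x * Q y * j y + P x * Q y * h1 (fst x) (fst y) + P x * Q y * h2 (snd x) (snd y)" for x y
  proof (cases "P x * Q y = 0")
    case True then show ?thesis by (simp only: True) simp
  next
    case False
    obtain x1 x2 where x: "x = (x1,x2)" by force
    obtain y1 y2 where y: "y = (y1,y2)" by force
    have Pp: "P x > 0" and Qp: "Q y > 0" using False P0[of x] Q0[of y] by (auto simp: order_le_less)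
    have "P x * prod_channel W1 W2 x y \<noteq> 0" using AC[unfolded ACd_def, rule_format, of "(x,y)"] False by auto
    then have "W1 x1 y1 \<noteq> 0" "W2 x2 y2 \<noteq> 0" by (auto simp: pc_eq x y)
    then have w1: "W1 x1 y1 > 0" and w2: "W2 x2 y2 > 0" using W10[of x1 y1] W20[of x2 y2] by auto
    have p1: "marg1 P x1 > 0" using marg1_ge[OF dP, of x1 x2] Pp x by simp
    have p2: "marg2 P x2 > 0" using marg2_ge[OF dP, of x1 x2] Pp x by simp
    have q1: "marg1 Q y1 > 0" using marg1_ge[OF dQ, of y1 y2] Qp y by simp
    have q2: "marg2 Q y2 > 0" using marg2_ge[OF dQ, of y1 y2] Qp y by simp
    have e1: "h1 x1 y1 = ln (marg1 Q y1) - ln (W1 x1 y1)"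
      using p1 q1 w1 by (simp add: h1_def ln_div ln_mult)
    have e2: "h2 x2 y2 = ln (marg2 Q y2) - ln (W2 x2 y2)"
      using p2 q2 w2 by (simp add: h2_def ln_div ln_mult)
    have e3: "j y = ln (Q y) - ln (marg1 Q y1) - ln (marg2 Q y2)"
      using Qp q1 q2 by (simp add: j_def pprod_def y ln_div ln_mult)
    have e4: "ln (P x * Q y / (P x * prod_channel W1 W2 x y)) = ln (Q y) - ln (W1 x1 y1) - ln (W2 x2 y2)"
      using Pp Qp w1 w2 by (simp add: pc_eq x y ln_div ln_mult)
    have L: "ln (P x * Q y / (P x * prod_channel W1 W2 x y)) = j y + h1 (fst x) (fst y) + h2 (snd x) (snd y)"
      using e1 e2 e3 e4 x y by simp
    show ?thesis by (simp only: False L if_False distrib_left)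
  qed
  have "KLs (\<lambda>(x,y). P x * Q y) (\<lambda>(x,y). P x * prod_channel W1 W2 x y)
     = (\<Sum>x\<in>UNIV. \<Sum>y\<in>UNIV. P x * Q y * j y + P x * Q y * h1 (fst x) (fst y) + P x * Q y * h2 (snd x) (snd y))"
    unfolding KLs_def by (subst sum_pair, intro sum.cong refl, simp only: prod.case pw)
  also have "\<dots> = (\<Sum>x\<in>UNIV. \<Sum>y\<in>UNIV. P x * Q y * j y) + (\<Sum>x\<in>UNIV. \<Sum>y\<in>UNIV. P x * Q y * h1 (fst x) (fst y))
       + (\<Sum>x\<in>UNIV. \<Sum>y\<in>UNIV. P x * Q y * h2 (snd x) (snd y))"
    by (simp add: sum.distrib)
  also have "(\<Sum>x\<in>UNIV. \<Sum>y\<in>UNIV. P x * Q y * j y) = KLs Q (pprod (marg1 Q) (marg2 Q))"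
  proof -
    have "(\<Sum>x\<in>UNIV. \<Sum>y\<in>UNIV. P x * Q y * j y) = (\<Sum>x\<in>UNIV. P x) * (\<Sum>y\<in>UNIV. Q y * j y)"
      by (simp add: sum_distrib_left sum_distrib_right mult.assoc, rule sum.swap)
    also have "\<dots> = (\<Sum>y\<in>UNIV. Q y * j y)" using dP by (simp add: is_distr_def)
    also have "\<dots> = KLs Q (pprod (marg1 Q) (marg2 Q))"
      unfolding KLs_def j_def by (intro sum.cong refl) simp
    finally show ?thesis .
  qed
  also have "(\<Sum>x\<in>UNIV. \<Sum>y\<in>UNIV. P x * Q y * h1 (fst x) (fst y))
      = KLs (\<lambda>(x,y). marg1 P x * marg1 Q y) (\<lambda>(x,y). marg1 P x * W1 x y)"
    unfolding rearr1 KLs_def by (subst sum_pair, intro sum.cong refl) (simp add: h1_def)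
  also have "(\<Sum>x\<in>UNIV. \<Sum>y\<in>UNIV. P x * Q y * h2 (snd x) (snd y))
      = KLs (\<lambda>(x,y). marg2 P x * marg2 Q y) (\<lambda>(x,y). marg2 P x * W2 x y)"
    unfolding rearr2 KLs_def by (subst sum_pair, intro sum.cong refl) (simp add: h2_def)
  finally show ?thesis .
qed

lemma ac_inf:
  fixes W1 :: "'x1::finite \<Rightarrow> 'y1::finite \<Rightarrow> real"
    and W2 :: "'x2::finite \<Rightarrow> 'y2::finite \<Rightarrow> real"
    and P :: "'x1 \<times> 'x2 \<Rightarrow> real" and Q :: "'y1 \<times> 'y2 \<Rightarrow> real"
  assumes dP: "is_distr P" and dQ: "is_distr Q"
    and AC: "ACd (\<lambda>(x,y). P x * Q y) (\<lambda>(x,y). P x * prod_channel W1 W2 x y)"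
  shows "ACd (\<lambda>(x,y). marg1 P x * marg1 Q y) (\<lambda>(x,y). marg1 P x * W1 x y)"
    and "ACd (\<lambda>(x,y). marg2 P x * marg2 Q y) (\<lambda>(x,y). marg2 P x * W2 x y)"
proof -
  show "ACd (\<lambda>(x,y). marg1 P x * marg1 Q y) (\<lambda>(x,y). marg1 P x * W1 x y)"
    unfolding ACd_def
  proof (clarify, rule ccontr)
    fix a b assume h: "marg1 P a * W1 a b = 0" "marg1 P a * marg1 Q b \<noteq> 0"
    then have "W1 a b = 0" "marg1 P a \<noteq> 0" "marg1 Q b \<noteq> 0" by auto
    moreover obtain a2 where "P (a,a2) \<noteq> 0" using marg1_ne[OF dP] \<open>marg1 P a \<noteq> 0\<close> by blast
    moreover obtain b2 where "Q (b,b2) \<noteq> 0" using marg1_ne[OF dQ] \<open>marg1 Q b \<noteq> 0\<close> by blast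
    ultimately show False using AC[unfolded ACd_def, rule_format, of "((a,a2),(b,b2))"] by (auto simp: pc_eq)
  qed
  show "ACd (\<lambda>(x,y). marg2 P x * marg2 Q y) (\<lambda>(x,y). marg2 P x * W2 x y)"
    unfolding ACd_def
  proof (clarify, rule ccontr)
    fix a b assume h: "marg2 P a * W2 a b = 0" "marg2 P a * marg2 Q b \<noteq> 0"
    then have "W2 a b = 0" "marg2 P a \<noteq> 0" "marg2 Q b \<noteq> 0" by auto
    moreover obtain a2 where "P (a2,a) \<noteq> 0" using marg2_ne[OF dP] \<open>marg2 P a \<noteq> 0\<close> by blast
    moreover obtain b2 where "Q (b2,b) \<noteq> 0" using marg2_ne[OF dQ] \<open>marg2 Q b \<noteq> 0\<close> by blast
    ultimately show False using AC[unfolded ACd_def, rule_format, of "((a2,a),(b2,b))"] by (auto simp: pc_eq)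
  qed
qed

lemma ac_prod:
  fixes W1 :: "'x1::finite \<Rightarrow> 'y1::finite \<Rightarrow> real"
    and W2 :: "'x2::finite \<Rightarrow> 'y2::finite \<Rightarrow> real"
    and P :: "'x1 \<times> 'x2 \<Rightarrow> real"
  assumes dP: "is_distr P"
    and A1: "ACd (\<lambda>(x,y). marg1 P x * Q1 y) (\<lambda>(x,y). marg1 P x * W1 x y)"
    and A2: "ACd (\<lambda>(x,y). marg2 P x * Q2 y) (\<lambda>(x,y). marg2 P x * W2 x y)"
  shows "ACd (\<lambda>(x,y). P x * pprod Q1 Q2 y) (\<lambda>(x,y). P x * prod_channel W1 W2 x y)"
  unfolding ACd_def
proof (clarify, rule ccontr)
  fix x1 x2 y1 y2
  assume h: "P (x1,x2) * prod_channel W1 W2 (x1,x2) (y1,y2) = 0" "P (x1,x2) * pprod Q1 Q2 (y1,y2) \<noteq> 0"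
  have P0: "P (x1,x2) \<ge> 0" using dP by (simp add: is_distr_def)
  have "P (x1,x2) \<noteq> 0" "Q1 y1 \<noteq> 0" "Q2 y2 \<noteq> 0" using h(2) by (auto simp: pprod_def)
  then have "marg1 P x1 \<noteq> 0" "marg2 P x2 \<noteq> 0"
    using marg1_ge[OF dP, of x1 x2] marg2_ge[OF dP, of x1 x2] P0 by auto
  then have "W1 x1 y1 \<noteq> 0" "W2 x2 y2 \<noteq> 0"
    using A1[unfolded ACd_def, rule_format, of "(x1,y1)"] A2[unfolded ACd_def, rule_format, of "(x2,y2)"]
      \<open>Q1 y1 \<noteq> 0\<close> \<open>Q2 y2 \<noteq> 0\<close> by auto
  then show False using h(1) \<open>P (x1,x2) \<noteq> 0\<close> by (simp add: pc_eq)
qed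

lemma I_nonneg:
  assumes dQ: "is_distr (Q :: 'a::finite \<times> 'b::finite \<Rightarrow> real)"
  shows "0 \<le> KLs Q (pprod (marg1 Q) (marg2 Q))"
proof (rule gibbs)
  show "0 \<le> Q a" for a using dQ unfolding is_distr_def by blast
  show "0 \<le> pprod (marg1 Q) (marg2 Q) a" for a
    using marg1_distr[OF dQ] marg2_distr[OF dQ] by (auto simp: pprod_def is_distr_def split: prod.splits)
  show "ACd Q (pprod (marg1 Q) (marg2 Q))" unfolding ACd_def
  proof (clarify)
    fix a b assume "pprod (marg1 Q) (marg2 Q) (a,b) = 0"
    then have "marg1 Q a = 0 \<or> marg2 Q b = 0" by (simp add: pprod_def)
    then show "Q (a,b) = 0" using marg1_ge[OF dQ, of a b] marg2_ge[OF dQ, of a b] dQ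
      by (auto simp: is_distr_def intro: order_antisym)
  qed
  show "sum (pprod (marg1 Q) (marg2 Q)) UNIV \<le> sum Q UNIV"
    using pprod_distr[OF marg1_distr[OF dQ] marg2_distr[OF dQ]] dQ by (simp add: is_distr_def)
qed

lemma I_prod:
  assumes "is_distr Q1" "is_distr Q2"
  shows "KLs (pprod Q1 Q2) (pprod (marg1 (pprod Q1 Q2)) (marg2 (pprod Q1 Q2))) = 0"
  using assms by (simp add: marg1_pprod marg2_pprod KLs_def, intro sum.neutral, auto)

lemma F_ge:
  fixes W1 :: "'x1::finite \<Rightarrow> 'y1::finite \<Rightarrow> real"
    and W2 :: "'x2::finite \<Rightarrow> 'y2::finite \<Rightarrow> real"
    and P :: "'x1 \<times> 'x2 \<Rightarrow> real" and Q :: "'y1 \<times> 'y2 \<Rightarrow> real"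
  assumes c1: "is_channel W1" and c2: "is_channel W2" and dP: "is_distr P" and dQ: "is_distr Q"
  shows "F W1 (marg1 P) (marg1 Q) + F W2 (marg2 P) (marg2 Q) \<le> F (prod_channel W1 W2) P Q"
proof (cases "ACd (\<lambda>(x,y). P x * Q y) (\<lambda>(x,y). P x * prod_channel W1 W2 x y)")
  case True
  note a = ac_inf[OF dP dQ True]
  have "KLs (\<lambda>(x,y). marg1 P x * marg1 Q y) (\<lambda>(x,y). marg1 P x * W1 x y)
      + KLs (\<lambda>(x,y). marg2 P x * marg2 Q y) (\<lambda>(x,y). marg2 P x * W2 x y)
     \<le> KLs (\<lambda>(x,y). P x * Q y) (\<lambda>(x,y). P x * prod_channel W1 W2 x y)"
    using decomp_real[OF c1 c2 dP dQ True] I_nonneg[OF dQ] by linarith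
  then show ?thesis using True a by (simp add: F_def KL_div_alt)
qed (simp add: F_def KL_div_alt)

lemma F_prod:
  fixes W1 :: "'x1::finite \<Rightarrow> 'y1::finite \<Rightarrow> real"
    and W2 :: "'x2::finite \<Rightarrow> 'y2::finite \<Rightarrow> real"
    and P :: "'x1 \<times> 'x2 \<Rightarrow> real"
  assumes c1: "is_channel W1" and c2: "is_channel W2" and dP: "is_distr P"
    and d1: "is_distr Q1" and d2: "is_distr Q2"
  shows "F (prod_channel W1 W2) P (pprod Q1 Q2) = F W1 (marg1 P) Q1 + F W2 (marg2 P) Q2"
proof (cases "ACd (\<lambda>(x,y). P x * pprod Q1 Q2 y) (\<lambda>(x,y). P x * prod_channel W1 W2 x y)")
  case True
  have dQ: "is_distr (pprod Q1 Q2)" using pprod_distr[OF d1 d2] .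
  note a = ac_inf[OF dP dQ True]
  note d = decomp_real[OF c1 c2 dP dQ True]
  show ?thesis using True a d I_prod[OF d1 d2] by (simp add: F_def KL_div_alt marg1_pprod[OF d2] marg2_pprod[OF d1])
next
  case False
  then have "\<not> ACd (\<lambda>(x,y). marg1 P x * Q1 y) (\<lambda>(x,y). marg1 P x * W1 x y)
    \<or> \<not> ACd (\<lambda>(x,y). marg2 P x * Q2 y) (\<lambda>(x,y). marg2 P x * W2 x y)"
    using ac_prod[OF dP] by blast
  then show ?thesis using False by (auto simp: F_def KL_div_alt)
qed

definition g :: "('x::finite \<Rightarrow> 'y::finite \<Rightarrow> real) \<Rightarrow> ('x \<Rightarrow> real) \<Rightarrow> ereal" where
  "g W P = (INF Q\<in>{Q. is_distr Q}. F W P Q)"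

lemma U_eq: "U_channel W = (SUP P\<in>{P. is_distr P}. g W P)"
  by (simp add: U_channel_def g_def F_def)

lemma g_nonneg: "is_channel W \<Longrightarrow> is_distr P \<Longrightarrow> 0 \<le> g W P"
  unfolding g_def by (auto intro: INF_greatest F_nonneg)

lemma U_nonneg: "is_channel (W :: 'x::finite \<Rightarrow> 'y::finite \<Rightarrow> real) \<Longrightarrow> 0 \<le> U_channel W"
proof -
  assume c: "is_channel W"
  obtain P :: "'x \<Rightarrow> real" where "is_distr P" using distr_ex by blast
  then have "g W P \<le> U_channel W" unfolding U_eq by (auto intro: SUP_upper)
  then show ?thesis using g_nonneg[OF c \<open>is_distr P\<close>] by simp
qed

lemma g_split:
  fixes W1 :: "'x1::finite \<Rightarrow> 'y1::finite \<Rightarrow> real"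
    and W2 :: "'x2::finite \<Rightarrow> 'y2::finite \<Rightarrow> real"
    and P :: "'x1 \<times> 'x2 \<Rightarrow> real"
  assumes c1: "is_channel W1" and c2: "is_channel W2" and dP: "is_distr P"
  shows "g (prod_channel W1 W2) P = g W1 (marg1 P) + g W2 (marg2 P)"
proof (rule antisym)
  have h12: "g (prod_channel W1 W2) P \<le> F W1 (marg1 P) Q1 + F W2 (marg2 P) Q2"
    if d1: "is_distr Q1" and d2: "is_distr Q2" for Q1 Q2
  proof -
    have "g (prod_channel W1 W2) P \<le> F (prod_channel W1 W2) P (pprod Q1 Q2)"
      unfolding g_def using pprod_distr[OF d1 d2] by (auto intro: INF_lower)
    then show ?thesis using F_prod[OF c1 c2 dP d1 d2] by simp
  qed
  have "g (prod_channel W1 W2) P \<le> g W1 (marg1 P) + F W2 (marg2 P) Q2"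
    if d2: "is_distr Q2" for Q2
  proof -
    have "g (prod_channel W1 W2) P \<le> (INF Q1\<in>{Q. is_distr Q}. F W1 (marg1 P) Q1 + F W2 (marg2 P) Q2)"
      using d2 by (auto intro: INF_greatest h12)
    also have "\<dots> = g W1 (marg1 P) + F W2 (marg2 P) Q2"
      unfolding g_def
      by (rule INF_ereal_add_left[OF distr_ex])
         (use F_nonneg[OF c2 marg2_distr[OF dP] d2] F_nonneg[OF c1 marg1_distr[OF dP]] in auto)
    finally show ?thesis .
  qed
  then have "g (prod_channel W1 W2) P \<le> (INF Q2\<in>{Q. is_distr Q}. g W1 (marg1 P) + F W2 (marg2 P) Q2)"
    by (auto intro: INF_greatest)
  also have "\<dots> = g W1 (marg1 P) + g W2 (marg2 P)"
    unfolding g_def[of W2]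
    by (rule INF_ereal_add_right[OF distr_ex])
       (use g_nonneg[OF c1 marg1_distr[OF dP]] F_nonneg[OF c2 marg2_distr[OF dP]] in auto)
  finally show "g (prod_channel W1 W2) P \<le> g W1 (marg1 P) + g W2 (marg2 P)" .
next
  show "g W1 (marg1 P) + g W2 (marg2 P) \<le> g (prod_channel W1 W2) P"
    unfolding g_def[of "prod_channel W1 W2"]
  proof (rule INF_greatest)
    fix Q :: "'y1 \<times> 'y2 \<Rightarrow> real" assume "Q \<in> {Q. is_distr Q}"
    then have dQ: "is_distr Q" by simp
    have "g W1 (marg1 P) + g W2 (marg2 P) \<le> F W1 (marg1 P) (marg1 Q) + F W2 (marg2 P) (marg2 Q)"
      unfolding g_def using marg1_distr[OF dQ] marg2_distr[OF dQ]
      by (intro add_mono INF_lower) auto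
    also have "\<dots> \<le> F (prod_channel W1 W2) P Q" by (rule F_ge[OF c1 c2 dP dQ])
    finally show "g W1 (marg1 P) + g W2 (marg2 P) \<le> F (prod_channel W1 W2) P Q" .
  qed
qed

theorem mainTheorem7:
  fixes W1 :: "'x1::finite \<Rightarrow> 'y1::finite \<Rightarrow> real"
    and W2 :: "'x2::finite \<Rightarrow> 'y2::finite \<Rightarrow> real"
  assumes "is_channel W1" and "is_channel W2"
  shows "U_channel (prod_channel W1 W2) = U_channel W1 + U_channel W2"
proof -
  note c1 = assms(1) and c2 = assms(2)
  have eq: "U_channel (prod_channel W1 W2) = (SUP P\<in>{P. is_distr P}. g W1 (marg1 P) + g W2 (marg2 P))"
    unfolding U_eq by (intro SUP_cong refl) (simp add: g_split[OF c1 c2])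
  show ?thesis
  proof (rule antisym)
    show "U_channel (prod_channel W1 W2) \<le> U_channel W1 + U_channel W2"
      unfolding eq
    proof (rule SUP_least)
      fix P :: "'x1 \<times> 'x2 \<Rightarrow> real" assume "P \<in> {P. is_distr P}"
      then have dP: "is_distr P" by simp
      show "g W1 (marg1 P) + g W2 (marg2 P) \<le> U_channel W1 + U_channel W2"
        unfolding U_eq using marg1_distr[OF dP] marg2_distr[OF dP]
        by (intro add_mono SUP_upper) auto
    qed
  next
    have step: "g W1 P1 + g W2 P2 \<le> U_channel (prod_channel W1 W2)"
      if d1: "is_distr P1" and d2: "is_distr P2" for P1 P2
    proof -
      have "g W1 P1 + g W2 P2 = g W1 (marg1 (pprod P1 P2)) + g W2 (marg2 (pprod P1 P2))"
        by (simp add: marg1_pprod[OF d2] marg2_pprod[OF d1])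
      also have "\<dots> \<le> U_channel (prod_channel W1 W2)"
        unfolding eq using pprod_distr[OF d1 d2] by (intro SUP_upper) auto
      finally show ?thesis .
    qed
    have step2: "g W1 P1 + U_channel W2 \<le> U_channel (prod_channel W1 W2)"
      if d1: "is_distr P1" for P1
    proof -
      have "g W1 P1 + U_channel W2 = (SUP P2\<in>{P. is_distr P}. g W1 P1 + g W2 P2)"
        unfolding U_eq[of W2]
        by (rule SUP_ereal_add_right[symmetric, OF distr_ex])
           (use g_nonneg[OF c1 d1] in auto)
      also have "\<dots> \<le> U_channel (prod_channel W1 W2)"
        using step[OF d1] by (auto intro: SUP_least)
      finally show ?thesis .
    qed
    have "U_channel W1 + U_channel W2 = (SUP P1\<in>{P. is_distr P}. g W1 P1 + U_channel W2)"
      unfolding U_eq[of W1]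
      by (rule SUP_ereal_add_left[symmetric, OF distr_ex])
         (use U_nonneg[OF c2] in auto)
    also have "\<dots> \<le> U_channel (prod_channel W1 W2)"
      using step2 by (auto intro: SUP_least)
    finally show "U_channel W1 + U_channel W2 \<le> U_channel (prod_channel W1 W2)" .
  qed
qed

end
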